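(* Let $n\ge 2$ be an integer and consider $n+1$ pipes $P_0,P_1,\dots,P_n$, where pipes $P_1,\dots,P_n$ join into pipe $P_0$. For $j\in\{0,1,\dots,n\}$ let $p_{j,\ell}(t),p_{j,r}(t),q_{j,\ell}(t),q_{j,r}(t)$ be real-valued differentiable functions of time satisfying the linearized pipe dynamics \[ \dot p_{j,r}=c_j\,(q_{j,r}-q_{j,\ell}),\qquad \dot q_{j,\ell}=b_j\,p_{j,r}+d_j\,p_{j,\ell}+e_j\,q_{j,\ell}, \] together with the junction constraints \[ p_{1,r}=p_{2,r}=\dots=p_{n,r}=p_{0,\ell},\qquad q_{1,r}+q_{2,r}+\dots+q_{n,r}=q_{0,\ell} \] for all $t$. Then for every $k\in\{1,\dots,n\}$ the variable $q_{k,r}$ is expressed in terms of the state variables $q_{j,\ell}$ by \[ \left(\sum_{j=1}^n\prod_{\substack{i=1\\ i\neq j}}^n c_i\right)q_{k,r}=\prod_{\substack{i=1\\ i\neq k}}^n c_i\left(q_{0,\ell}-\sum_{\substack{i=1\\ i\neq k}}^n q_{i,\ell}\right)+\left(\sum_{j=1}^n\prod_{\substack{i=1\\ i\neq j}}^n c_i-\prod_{\substack{i=1\\ i\neq k}}^n c_i\right)q_{k,\ell} \] for all $t$.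
   Context: Model of isothermal one-dimensional gas flow in a pipe $P_j$: $p$ denotes pressure, $q$ mass flow; subscripts $\ell$ and $r$ denote the values at the left end ($x=0$) and right end ($x=L_j$) of the pipe. The coefficients are $c_j=-\frac{R_sT_0z_0}{A_jL_j}$, $b_j=-\frac{A_j}{L_j}$, $d_j=\frac{A_j}{L_j}+\frac{\lambda_j R_sT_0z_0}{2D_jA_j}\frac{q_{ss,j}|q_{ss,j}|}{p_{\ell,ss,j}^2}-\frac{A_jgh_j}{R_sT_0z_0L_j}$, $e_j=-\frac{\lambda_j R_sT_0z_0}{D_jA_j}\frac{|q_{ss,j}|}{p_{\ell,ss,j}}$, where $R_s>0$ (specific gas constant), $T_0>0$ (temperature), $z_0>0$ (compressibility factor), $g$ (gravity) are constants and, for pipe $j$, $A_j>0$ is the cross-sectional area, $L_j>0$ the length, $D_j>0$ the inner diameter, $\lambda_j$ the friction factor, $h_j$ the elevation difference, and $q_{ss,j}>0$, $p_{\ell,ss,j}>0$ nominal (steady-state) mass flow and left pressure. In particular all $c_j<0$. For each pipe, $(p_{j,r},q_{j,\ell})$ are called state variables and $p_{j,\ell},q_{j,r}$ input variables. *)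

theory Defs
  imports Complex_Main
begin

text \<open>Physical constants: Rs (specific gas constant), T0 (temperature), z0 (compressibility),
  g (gravity). Pipe data: A (area), L (length), D (diameter), lam (friction factor),
  h (elevation difference), qss (nominal mass flow), pss (nominal left pressure).\<close>

definition coef_c :: "real \<Rightarrow> real \<Rightarrow> real \<Rightarrow> (nat \<Rightarrow> real) \<Rightarrow> (nat \<Rightarrow> real) \<Rightarrow> nat \<Rightarrow> real" where
  "coef_c Rs T0 z0 A L j = - (Rs * T0 * z0) / (A j * L j)"

definition coef_b :: "(nat \<Rightarrow> real) \<Rightarrow> (nat \<Rightarrow> real) \<Rightarrow> nat \<Rightarrow> real" where
  "coef_b A L j = - A j / L j"

definition coef_d :: "real \<Rightarrow> real \<Rightarrow> real \<Rightarrow> real \<Rightarrow> (nat \<Rightarrow> real) \<Rightarrow> (nat \<Rightarrow> real) \<Rightarrow>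
    (nat \<Rightarrow> real) \<Rightarrow> (nat \<Rightarrow> real) \<Rightarrow> (nat \<Rightarrow> real) \<Rightarrow> (nat \<Rightarrow> real) \<Rightarrow> (nat \<Rightarrow> real) \<Rightarrow> nat \<Rightarrow> real" where
  "coef_d Rs T0 z0 g A L D lam h qss pss j =
     A j / L j + (lam j * Rs * T0 * z0) / (2 * D j * A j) * (qss j * \<bar>qss j\<bar>) / (pss j)^2
     - (A j * g * h j) / (Rs * T0 * z0 * L j)"

definition coef_e :: "real \<Rightarrow> real \<Rightarrow> real \<Rightarrow> (nat \<Rightarrow> real) \<Rightarrow> (nat \<Rightarrow> real) \<Rightarrow>
    (nat \<Rightarrow> real) \<Rightarrow> (nat \<Rightarrow> real) \<Rightarrow> (nat \<Rightarrow> real) \<Rightarrow> nat \<Rightarrow> real" where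
  "coef_e Rs T0 z0 A D lam qss pss j =
     - (lam j * Rs * T0 * z0) / (D j * A j) * \<bar>qss j\<bar> / pss j"

end

theory Submission
  imports Defs
begin

theorem theorem1:
  fixes n :: nat
    and Rs T0 z0 g :: real
    and A L D lam h qss pss :: "nat \<Rightarrow> real"
    and p_l p_r q_l q_r :: "nat \<Rightarrow> real \<Rightarrow> real"
  defines "c \<equiv> coef_c Rs T0 z0 A L"
    and "b \<equiv> coef_b A L"
    and "d \<equiv> coef_d Rs T0 z0 g A L D lam h qss pss"
    and "e \<equiv> coef_e Rs T0 z0 A D lam qss pss"
  assumes n2: "n \<ge> 2"
    and consts_pos: "Rs > 0" "T0 > 0" "z0 > 0"
    and pipe_pos: "\<forall>j\<le>n. A j > 0 \<and> L j > 0 \<and> D j > 0 \<and> qss j > 0 \<and> pss j > 0"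
    and diff_pl: "\<forall>j\<le>n. \<forall>t. p_l j differentiable (at t)"
    and diff_qr: "\<forall>j\<le>n. \<forall>t. q_r j differentiable (at t)"
    and dyn_p: "\<forall>j\<le>n. \<forall>t. (p_r j has_real_derivative c j * (q_r j t - q_l j t)) (at t)"
    and dyn_q: "\<forall>j\<le>n. \<forall>t. (q_l j has_real_derivative
                   b j * p_r j t + d j * p_l j t + e j * q_l j t) (at t)"
    and junc_p: "\<forall>j\<in>{1..n}. \<forall>t. p_r j t = p_l 0 t"
    and junc_q: "\<forall>t. (\<Sum>j=1..n. q_r j t) = q_l 0 t"
  shows "\<forall>k\<in>{1..n}. \<forall>t.
     (\<Sum>j=1..n. \<Prod>i\<in>{1..n}-{j}. c i) * q_r k t =
       (\<Prod>i\<in>{1..n}-{k}. c i) * (q_l 0 t - (\<Sum>i\<in>{1..n}-{k}. q_l i t))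
       + ((\<Sum>j=1..n. \<Prod>i\<in>{1..n}-{j}. c i) - (\<Prod>i\<in>{1..n}-{k}. c i)) * q_l k t"
proof (intro ballI allI)
  fix k t assume k: "k \<in> {1..n}"
  define D where "D = c 1 * (q_r 1 t - q_l 1 t)"
  have n1: "1 \<le> n" using n2 by simp
  have Dj: "c j * (q_r j t - q_l j t) = D" if j: "j \<in> {1..n}" for j
  proof -
    have eq: "p_r j = p_r 1" using junc_p j n1 by fastforce
    have d1: "(p_r j has_real_derivative c j * (q_r j t - q_l j t)) (at t)" using dyn_p j by auto
    have d2: "(p_r j has_real_derivative c 1 * (q_r 1 t - q_l 1 t)) (at t)" using dyn_p n1 eq by auto
    show ?thesis using DERIV_unique[OF d1 d2] D_def by simp
  qed
  define P where "P = (\<lambda>j. \<Prod>i\<in>{1..n}-{j}. c i)"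
  have termeq: "P j * (q_r k t - q_l k t) = P k * (q_r j t - q_l j t)" if j: "j \<in> {1..n}" for j
  proof (cases "j = k")
    case True then show ?thesis by simp
  next
    case False
    define Q where "Q = (\<Prod>i\<in>{1..n}-{j}-{k}. c i)"
    have "P j = c k * Q" unfolding P_def Q_def
      using prod.remove[of "{1..n}-{j}" k c] k False by simp
    moreover have "P k = c j * Q"
    proof -
      have se: "{1..n}-{k}-{j} = {1..n}-{j}-{k}" by blast
      show ?thesis unfolding P_def Q_def
        using prod.remove[of "{1..n}-{k}" j c] j False se by simp
    qed
    ultimately show ?thesis using Dj[OF j] Dj[OF k] by (simp add: algebra_simps)
  qed
  have sumeq: "(\<Sum>j=1..n. P j) * (q_r k t - q_l k t) = P k * (\<Sum>j=1..n. q_r j t - q_l j t)"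
    by (simp add: sum_distrib_left sum_distrib_right termeq)
  have split: "(\<Sum>i=1..n. q_l i t) = q_l k t + (\<Sum>i\<in>{1..n}-{k}. q_l i t)"
    using sum.remove[of "{1..n}" k "\<lambda>i. q_l i t"] k by simp
  have h0: "(\<Sum>j=1..n. q_r j t - q_l j t) = q_l 0 t - (\<Sum>i=1..n. q_l i t)"
    using junc_q by (simp add: sum_subtractf)
  have h1: "q_l 0 t = q_l k t + (\<Sum>i\<in>{1..n}-{k}. q_l i t) + (\<Sum>j=1..n. q_r j t - q_l j t)"
    using h0 split by simp
  show "(\<Sum>j=1..n. \<Prod>i\<in>{1..n}-{j}. c i) * q_r k t =
       (\<Prod>i\<in>{1..n}-{k}. c i) * (q_l 0 t - (\<Sum>i\<in>{1..n}-{k}. q_l i t))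
       + ((\<Sum>j=1..n. \<Prod>i\<in>{1..n}-{j}. c i) - (\<Prod>i\<in>{1..n}-{k}. c i)) * q_l k t"
    using sumeq unfolding P_def h1 by (simp add: algebra_simps)
qed

end
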